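(* For any query $Q$, $\mathsf{w}(Q)\le\mathsf{w}(\widehat Q)\le\mathsf{w}(Q)+1$, where $\widehat Q$ is the multivariate extension of $Q$.
   Context: A query is a full conjunctive query $Q = R_1(\mathbf X_1)\wedge\cdots\wedge R_k(\mathbf X_k)$. Multivariate extension: take fresh variables $Z_1,\dots,Z_k$. For a permutation $\sigma$ of $[k]$, the component $\widehat Q_\sigma$ replaces each atom $R_{\sigma_i}(\mathbf X_{\sigma_i})$ by $\widehat R_{\sigma_i}(Z_1,\dots,Z_i,\mathbf X_{\sigma_i})$; $\widehat Q$ is the union of all components. Fractional hypertree width $\mathsf{w}(P)$ of a query $P$: minimum over tree decompositions of $P$ (trees with bags of variables covering every atom schema, the bags containing any variable forming a connected subtree) of the maximum over bags $B$ of the fractional edge cover number of $P$ restricted to $B$ (each atom schema intersected with $B$). For a union of queries, $\mathsf{w}$ is the maximum over the queries. *)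

theory Defs
  imports "HOL-Analysis.Analysis" "HOL-Combinatorics.Permutations"
begin

type_synonym ('r, 'v) query = "('r \<times> 'v list) list"

definition schema :: "'r \<times> 'v list \<Rightarrow> 'v set" where
  "schema a = set (snd a)"

definition qvars :: "('r, 'v) query \<Rightarrow> 'v set" where
  "qvars Q = (\<Union>a\<in>set Q. schema a)"

definition connected_in :: "nat set set \<Rightarrow> nat set \<Rightarrow> bool" where
  "connected_in E S \<longleftrightarrow>
     (\<forall>a\<in>S. \<forall>b\<in>S. (a, b) \<in> {(x, y). {x, y} \<in> E \<and> x \<in> S \<and> y \<in> S}\<^sup>*)"

definition is_tree :: "nat set \<Rightarrow> nat set set \<Rightarrow> bool" where
  "is_tree N E \<longleftrightarrow> finite N \<and> N \<noteq> {} \<and>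
     E \<subseteq> {{a, b} | a b. a \<in> N \<and> b \<in> N \<and> a \<noteq> b} \<and>
     connected_in E N \<and> card E + 1 = card N"

definition tree_decomp ::
  "('r, 'v) query \<Rightarrow> nat set \<Rightarrow> nat set set \<Rightarrow> (nat \<Rightarrow> 'v set) \<Rightarrow> bool" where
  "tree_decomp Q N E bag \<longleftrightarrow> is_tree N E \<and>
     (\<forall>n\<in>N. bag n \<subseteq> qvars Q) \<and>
     (\<forall>a\<in>set Q. \<exists>n\<in>N. schema a \<subseteq> bag n) \<and>
     (\<forall>x. connected_in E {n \<in> N. x \<in> bag n})"

definition fec :: "('r, 'v) query \<Rightarrow> 'v set \<Rightarrow> real" where
  "fec Q B = Inf {(\<Sum>j<length Q. w j) | w :: nat \<Rightarrow> real.
      (\<forall>j<length Q. 0 \<le> w j) \<and>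
      (\<forall>x\<in>B. (\<Sum>j\<in>{j. j < length Q \<and> x \<in> schema (Q ! j) \<inter> B}. w j) \<ge> 1)}"

definition fhw :: "('r, 'v) query \<Rightarrow> real" where
  "fhw Q = Inf {Max ((\<lambda>n. fec Q (bag n)) ` N) | N E bag. tree_decomp Q N E bag}"

definition fhw_union :: "('r, 'v) query set \<Rightarrow> real" where
  "fhw_union U = Max (fhw ` U)"

text \<open>Multivariate extension. Original variables are Inl x; the fresh variable
  Z_j is Inr j (j = 1..k). Atoms of Q are indexed 0..k-1, permutations of {0..<k}.\<close>

datatype 'r hat_rel = Hat 'r

definition mv_component ::
  "('r, 'v) query \<Rightarrow> (nat \<Rightarrow> nat) \<Rightarrow> ('r hat_rel, 'v + nat) query" where
  "mv_component Q \<sigma> =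
     map (\<lambda>i. (Hat (fst (Q ! \<sigma> i)),
               map Inr [1..<i + 2] @ map Inl (snd (Q ! \<sigma> i))))
         [0..<length Q]"

definition mv_extension :: "('r, 'v) query \<Rightarrow> ('r hat_rel, 'v + nat) query set" where
  "mv_extension Q = {mv_component Q \<sigma> | \<sigma>. \<sigma> permutes {..<length Q}}"

end

theory Submission imports Defs begin

lemma sum_filter_if: "sum f {j. j < (k::nat) \<and> P j} = (\<Sum>j<k. if P j then f j else 0)"
proof -
  have "{j. j < k \<and> P j} = {j \<in> {..<k}. P j}" by auto
  moreover have "sum f {j \<in> {..<k}. P j} = (\<Sum>j<k. if P j then f j else 0)"
    by (rule sum.inter_filter) simp
  ultimately show ?thesis by simp
qed

lemma sum_perm: "\<sigma> permutes {..<k} \<Longrightarrow> (\<Sum>j<k. g j) = (\<Sum>i<(k::nat). g (\<sigma> i))"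
  using sum.permute[of \<sigma> "{..<k}" g] by simp

lemma qvars_nth: "qvars P = (\<Union>i<length P. schema (P ! i))"
  unfolding qvars_def set_conv_nth by blast

lemma comp_len[simp]: "length (mv_component Q \<sigma>) = length Q"
  by (simp add: mv_component_def)

lemma comp_schema: "i < length Q \<Longrightarrow>
   schema (mv_component Q \<sigma> ! i) = Inr ` {1..i+1} \<union> Inl ` schema (Q ! \<sigma> i)"
  by (auto simp: mv_component_def schema_def atLeastLessThanSuc_atLeastAtMost)

lemma fec_le:
  assumes "\<forall>j<length P. 0 \<le> w j"
    "\<forall>x\<in>B. (\<Sum>j\<in>{j. j < length P \<and> x \<in> schema (P ! j) \<inter> B}. w j) \<ge> 1"
  shows "fec P B \<le> (\<Sum>j<length P. w j)"
  unfolding fec_def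
proof (rule cInf_lower)
  show "(\<Sum>j<length P. w j) \<in> {(\<Sum>j<length P. w j) | w :: nat \<Rightarrow> real.
      (\<forall>j<length P. 0 \<le> w j) \<and>
      (\<forall>x\<in>B. (\<Sum>j\<in>{j. j < length P \<and> x \<in> schema (P ! j) \<inter> B}. w j) \<ge> 1)}"
    using assms by (intro CollectI exI[of _ w]) simp
  show "bdd_below {(\<Sum>j<length P. w j) | w :: nat \<Rightarrow> real.
      (\<forall>j<length P. 0 \<le> w j) \<and>
      (\<forall>x\<in>B. (\<Sum>j\<in>{j. j < length P \<and> x \<in> schema (P ! j) \<inter> B}. w j) \<ge> 1)}"
    by (rule bdd_belowI[of _ 0]) (auto intro!: sum_nonneg)
qed

lemma feasible_one:
  assumes "B \<subseteq> qvars P"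
  shows "(\<forall>j<length P. 0 \<le> (\<lambda>_. 1::real) j) \<and>
      (\<forall>x\<in>B. (\<Sum>j\<in>{j. j < length P \<and> x \<in> schema (P ! j) \<inter> B}. (\<lambda>_. 1::real) j) \<ge> 1)"
proof (intro conjI allI impI ballI)
  fix x assume "x \<in> B"
  then obtain i where i: "i < length P" "x \<in> schema (P ! i)" using assms by (auto simp: qvars_nth)
  have "(\<Sum>j\<in>{i}. (1::real)) \<le> (\<Sum>j\<in>{j. j < length P \<and> x \<in> schema (P ! j) \<inter> B}. 1)"
    by (rule sum_mono2) (use i \<open>x \<in> B\<close> in auto)
  then show "(\<Sum>j\<in>{j. j < length P \<and> x \<in> schema (P ! j) \<inter> B}. (\<lambda>_. 1::real) j) \<ge> 1" by simp
qed simp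

lemma fec_ge:
  assumes "B \<subseteq> qvars P"
    "\<And>w. \<forall>j<length P. 0 \<le> w j \<Longrightarrow>
     \<forall>x\<in>B. (\<Sum>j\<in>{j. j < length P \<and> x \<in> schema (P ! j) \<inter> B}. w j) \<ge> 1 \<Longrightarrow>
     c \<le> (\<Sum>j<length P. w j)"
  shows "c \<le> fec P B"
  unfolding fec_def
proof (rule cInf_greatest)
  have "(\<Sum>j<length P. (\<lambda>_. 1::real) j) \<in> {(\<Sum>j<length P. w j) | w :: nat \<Rightarrow> real.
      (\<forall>j<length P. 0 \<le> w j) \<and>
      (\<forall>x\<in>B. (\<Sum>j\<in>{j. j < length P \<and> x \<in> schema (P ! j) \<inter> B}. w j) \<ge> 1)}"
    using feasible_one[OF assms(1)] by (intro CollectI exI[of _ "\<lambda>_. 1::real"]) simp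
  then show "{(\<Sum>j<length P. w j) | w :: nat \<Rightarrow> real.
      (\<forall>j<length P. 0 \<le> w j) \<and>
      (\<forall>x\<in>B. (\<Sum>j\<in>{j. j < length P \<and> x \<in> schema (P ! j) \<inter> B}. w j) \<ge> 1)} \<noteq> {}"
    by blast
next
  fix y assume "y \<in> {(\<Sum>j<length P. w j) | w :: nat \<Rightarrow> real.
      (\<forall>j<length P. 0 \<le> w j) \<and>
      (\<forall>x\<in>B. (\<Sum>j\<in>{j. j < length P \<and> x \<in> schema (P ! j) \<inter> B}. w j) \<ge> 1)}"
  then obtain w :: "nat \<Rightarrow> real" where "y = (\<Sum>j<length P. w j)" "\<forall>j<length P. 0 \<le> w j"
      "\<forall>x\<in>B. (\<Sum>j\<in>{j. j < length P \<and> x \<in> schema (P ! j) \<inter> B}. w j) \<ge> 1" by blast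
  then show "c \<le> y" using assms(2) by simp
qed

lemma fec_nonneg: "B \<subseteq> qvars P \<Longrightarrow> 0 \<le> fec P B"
  by (rule fec_ge) (auto intro!: sum_nonneg)

lemma trivial_td: "tree_decomp P {0} {} (\<lambda>_. qvars P)"
  unfolding tree_decomp_def is_tree_def connected_in_def qvars_def by auto

lemma td_Max_nonneg:
  assumes "tree_decomp P N E bag" shows "0 \<le> Max ((\<lambda>n. fec P (bag n)) ` N)"
proof -
  from assms have N: "finite N" "N \<noteq> {}" and b: "\<forall>n\<in>N. bag n \<subseteq> qvars P"
    by (auto simp: tree_decomp_def is_tree_def)
  then obtain n where "n \<in> N" by auto
  then have "fec P (bag n) \<le> Max ((\<lambda>n. fec P (bag n)) ` N)" using N by (intro Max_ge) auto
  moreover have "0 \<le> fec P (bag n)" using b \<open>n \<in> N\<close> by (intro fec_nonneg) auto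
  ultimately show ?thesis by linarith
qed

lemma fhw_le:
  assumes "tree_decomp P N E bag" shows "fhw P \<le> Max ((\<lambda>n. fec P (bag n)) ` N)"
  unfolding fhw_def
proof (rule cInf_lower)
  show "Max ((\<lambda>n. fec P (bag n)) ` N) \<in> {Max ((\<lambda>n. fec P (bag n)) ` N) | N E bag. tree_decomp P N E bag}"
    using assms by blast
  show "bdd_below {Max ((\<lambda>n. fec P (bag n)) ` N) | N E bag. tree_decomp P N E bag}"
    by (rule bdd_belowI[of _ 0]) (auto intro: td_Max_nonneg)
qed

lemma fhw_ge:
  assumes "\<And>N E bag. tree_decomp P N E bag \<Longrightarrow> c \<le> Max ((\<lambda>n. fec P (bag n)) ` N)"
  shows "c \<le> fhw P"
  unfolding fhw_def
  apply (rule cInf_greatest)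
  using trivial_td apply blast
  using assms by blast

lemma Max_mono_fun:
  assumes "finite N" "N \<noteq> {}" "\<And>n. n \<in> N \<Longrightarrow> (f n::real) \<le> g n + c"
  shows "Max (f ` N) \<le> Max (g ` N) + c"
proof (rule Max.boundedI)
  show "finite (f ` N)" "f ` N \<noteq> {}" using assms by auto
  fix a assume "a \<in> f ` N"
  then obtain n where n: "n \<in> N" "a = f n" by auto
  have "g n \<le> Max (g ` N)" using assms n by (intro Max_ge) auto
  then show "a \<le> Max (g ` N) + c" using assms(3)[OF n(1)] n by linarith
qed

lemma qvars_comp:
  assumes "\<sigma> permutes {..<length Q}"
  shows "qvars (mv_component Q \<sigma>) = Inr ` {1..length Q} \<union> Inl ` qvars Q"
proof
  show "qvars (mv_component Q \<sigma>) \<subseteq> Inr ` {1..length Q} \<union> Inl ` qvars Q"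
  proof
    fix y assume "y \<in> qvars (mv_component Q \<sigma>)"
    then obtain i where i: "i < length Q" "y \<in> schema (mv_component Q \<sigma> ! i)"
      unfolding qvars_nth by auto
    have si: "\<sigma> i < length Q" using i(1) permutes_in_image[OF assms] by simp
    have s: "y \<in> Inr ` {1..i+1} \<union> Inl ` schema (Q ! \<sigma> i)"
      using i(2) comp_schema[OF i(1)] by simp
    have a: "{1..i+1} \<subseteq> {1..length Q}" using i by auto
    have b: "schema (Q ! \<sigma> i) \<subseteq> qvars Q" unfolding qvars_nth using si by blast
    show "y \<in> Inr ` {1..length Q} \<union> Inl ` qvars Q"
      using s a b by blast
  qed
  show "Inr ` {1..length Q} \<union> Inl ` qvars Q \<subseteq> qvars (mv_component Q \<sigma>)"
  proof
    fix y assume y: "y \<in> Inr ` {1..length Q} \<union> Inl ` qvars Q"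
    show "y \<in> qvars (mv_component Q \<sigma>)"
    proof (cases "y \<in> Inl ` qvars Q")
      case True
      then obtain x j where xj: "y = Inl x" "j < length Q" "x \<in> schema (Q ! j)"
        unfolding qvars_nth by blast
      define i where "i = inv \<sigma> j"
      have i: "i < length Q" using permutes_in_image[OF permutes_inv[OF assms]] xj(2) i_def by simp
      have "\<sigma> i = j" using permutes_inverses(1)[OF assms] i_def by simp
      then have "y \<in> schema (mv_component Q \<sigma> ! i)"
        using xj comp_schema[OF i] by simp
      then show ?thesis unfolding qvars_nth using i by auto
    next
      case False
      then obtain j where j: "y = Inr j" "1 \<le> j" "j \<le> length Q" using y by auto
      have l: "length Q - 1 < length Q" using j by simp
      have "y \<in> schema (mv_component Q \<sigma> ! (length Q - 1))"
        using j comp_schema[OF l] by simp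
      then show ?thesis unfolding qvars_nth using l by auto
    qed
  qed
qed

lemma fec_restrict:
  assumes p: "\<sigma> permutes {..<length Q}" and B: "B \<subseteq> qvars (mv_component Q \<sigma>)"
  shows "fec Q {x. Inl x \<in> B} \<le> fec (mv_component Q \<sigma>) B"
proof (rule fec_ge)
  show "B \<subseteq> qvars (mv_component Q \<sigma>)" by fact
  fix w :: "nat \<Rightarrow> real" assume w0: "\<forall>j<length (mv_component Q \<sigma>). 0 \<le> w j"
    and w1: "\<forall>y\<in>B. 1 \<le> (\<Sum>j\<in>{j. j < length (mv_component Q \<sigma>) \<and> y \<in> schema (mv_component Q \<sigma> ! j) \<inter> B}. w j)"
  let ?k = "length Q"
  define v :: "nat \<Rightarrow> real" where "v j = w (inv \<sigma> j)" for j
  have inv: "\<And>i. inv \<sigma> (\<sigma> i) = i" using permutes_inverses(2)[OF p] by simp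
  have sv: "(\<Sum>j<?k. v j) = (\<Sum>j<?k. w j)"
    using sum_perm[OF p, of v] by (simp add: v_def inv)
  have "fec Q {x. Inl x \<in> B} \<le> (\<Sum>j<?k. v j)"
  proof (rule fec_le)
    show "\<forall>j<length Q. 0 \<le> v j"
      using w0 permutes_in_image[OF permutes_inv[OF p]] by (simp add: v_def)
    show "\<forall>x\<in>{x. Inl x \<in> B}. 1 \<le> (\<Sum>j\<in>{j. j < length Q \<and> x \<in> schema (Q ! j) \<inter> {x. Inl x \<in> B}}. v j)"
    proof
      fix x assume x: "x \<in> {x. Inl x \<in> B}"
      have "(\<Sum>j\<in>{j. j < length Q \<and> x \<in> schema (Q ! j) \<inter> {x. Inl x \<in> B}}. v j)
          = (\<Sum>j<?k. if x \<in> schema (Q ! j) \<inter> {x. Inl x \<in> B} then v j else 0)"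
        by (rule sum_filter_if)
      also have "\<dots> = (\<Sum>i<?k. if x \<in> schema (Q ! \<sigma> i) \<inter> {x. Inl x \<in> B} then v (\<sigma> i) else 0)"
        by (rule sum_perm[OF p])
      also have "\<dots> = (\<Sum>i<?k. if x \<in> schema (Q ! \<sigma> i) \<inter> {x. Inl x \<in> B} then w i else 0)"
        unfolding v_def by (rule sum.cong[OF refl]) (simp only: inv)
      also have "\<dots> = (\<Sum>i<?k. if Inl x \<in> schema (mv_component Q \<sigma> ! i) \<inter> B then w i else 0)"
        using x by (intro sum.cong) (auto simp: comp_schema)
      also have "\<dots> = (\<Sum>j\<in>{j. j < length (mv_component Q \<sigma>) \<and> Inl x \<in> schema (mv_component Q \<sigma> ! j) \<inter> B}. w j)"
        by (simp add: sum_filter_if)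
      finally show "1 \<le> (\<Sum>j\<in>{j. j < length Q \<and> x \<in> schema (Q ! j) \<inter> {x. Inl x \<in> B}}. v j)"
        using w1 x by simp
    qed
  qed
  then show "fec Q {x. Inl x \<in> B} \<le> (\<Sum>j<length (mv_component Q \<sigma>). w j)" using sv by simp
qed


lemma td_restrict:
  assumes p: "\<sigma> permutes {..<length Q}" and td: "tree_decomp (mv_component Q \<sigma>) N E bag"
  shows "tree_decomp Q N E (\<lambda>n. {x. Inl x \<in> bag n})"
  unfolding tree_decomp_def
proof (intro conjI ballI allI)
  show "is_tree N E" using td by (simp add: tree_decomp_def)
  fix x show "connected_in E {n \<in> N. x \<in> {x. Inl x \<in> bag n}}"
    using td unfolding tree_decomp_def by auto
next
  fix n assume "n \<in> N"
  then have "bag n \<subseteq> qvars (mv_component Q \<sigma>)" using td by (simp add: tree_decomp_def)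
  then show "{x. Inl x \<in> bag n} \<subseteq> qvars Q" by (auto simp: qvars_comp[OF p])
next
  fix a assume "a \<in> set Q"
  then obtain j where j: "j < length Q" "a = Q ! j" by (auto simp: in_set_conv_nth)
  define i where "i = inv \<sigma> j"
  have i: "i < length Q" using permutes_in_image[OF permutes_inv[OF p]] j(1) i_def by simp
  have si: "\<sigma> i = j" using permutes_inverses(1)[OF p] i_def by simp
  have "mv_component Q \<sigma> ! i \<in> set (mv_component Q \<sigma>)" using i by simp
  then obtain n where n: "n \<in> N" "schema (mv_component Q \<sigma> ! i) \<subseteq> bag n"
    using td by (auto simp: tree_decomp_def)
  then have "schema a \<subseteq> {x. Inl x \<in> bag n}"
    using i si j by (auto simp: comp_schema)
  then show "\<exists>n\<in>N. schema a \<subseteq> {x. Inl x \<in> bag n}" using n(1) by blast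
qed

lemma td_extend:
  assumes p: "\<sigma> permutes {..<length Q}" and td: "tree_decomp Q N E bag"
  shows "tree_decomp (mv_component Q \<sigma>) N E (\<lambda>n. Inl ` bag n \<union> Inr ` {1..length Q})"
  unfolding tree_decomp_def
proof (intro conjI ballI allI)
  show tr: "is_tree N E" using td by (simp add: tree_decomp_def)
  fix y show "connected_in E {n \<in> N. y \<in> Inl ` bag n \<union> Inr ` {1..length Q}}"
  proof (cases y)
    case (Inl x)
    then have "{n \<in> N. y \<in> Inl ` bag n \<union> Inr ` {1..length Q}} = {n \<in> N. x \<in> bag n}" by auto
    then show ?thesis using td unfolding tree_decomp_def by simp
  next
    case (Inr j)
    show ?thesis
    proof (cases "j \<in> {1..length Q}")
      case True
      then have "{n \<in> N. y \<in> Inl ` bag n \<union> Inr ` {1..length Q}} = N" using Inr by auto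
      then show ?thesis using tr by (simp add: is_tree_def)
    next
      case False
      then have "{n \<in> N. y \<in> Inl ` bag n \<union> Inr ` {1..length Q}} = {}" using Inr by auto
      moreover have "connected_in E {}" by (simp add: connected_in_def)
      ultimately show ?thesis by (simp only:)
    qed
  qed
next
  fix n assume "n \<in> N"
  then have "bag n \<subseteq> qvars Q" using td by (simp add: tree_decomp_def)
  then show "Inl ` bag n \<union> Inr ` {1..length Q} \<subseteq> qvars (mv_component Q \<sigma>)"
    by (auto simp: qvars_comp[OF p])
next
  fix a assume "a \<in> set (mv_component Q \<sigma>)"
  then obtain i where i: "i < length Q" "a = mv_component Q \<sigma> ! i" by (auto simp: in_set_conv_nth)
  have "\<sigma> i < length Q" using i(1) permutes_in_image[OF p] by simp
  then have "Q ! \<sigma> i \<in> set Q" by simp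
  then obtain n where n: "n \<in> N" "schema (Q ! \<sigma> i) \<subseteq> bag n"
    using td by (auto simp: tree_decomp_def)
  moreover have "{1..i+1} \<subseteq> {1..length Q}" using i by auto
  ultimately have "schema a \<subseteq> Inl ` bag n \<union> Inr ` {1..length Q}"
    using i by (auto simp: comp_schema)
  then show "\<exists>n\<in>N. schema a \<subseteq> Inl ` bag n \<union> Inr ` {1..length Q}" using n(1) by blast
qed

lemma fec_extend:
  assumes p: "\<sigma> permutes {..<length Q}" and B: "B \<subseteq> qvars Q"
  shows "fec (mv_component Q \<sigma>) (Inl ` B \<union> Inr ` {1..length Q}) \<le> fec Q B + 1"
proof -
  let ?k = "length Q"
  let ?C = "mv_component Q \<sigma>"
  let ?B = "Inl ` B \<union> Inr ` {1..length Q}"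
  have "fec ?C ?B - 1 \<le> fec Q B"
  proof (rule fec_ge[OF B])
    fix w :: "nat \<Rightarrow> real" assume w0: "\<forall>j<length Q. 0 \<le> w j"
      and w1: "\<forall>x\<in>B. 1 \<le> (\<Sum>j\<in>{j. j < length Q \<and> x \<in> schema (Q ! j) \<inter> B}. w j)"
    define w' :: "nat \<Rightarrow> real" where "w' i = w (\<sigma> i) + (if i = ?k - 1 then 1 else 0)" for i
    have sig: "\<And>i. i < ?k \<Longrightarrow> \<sigma> i < ?k" using permutes_in_image[OF p] by simp
    have w'0: "\<forall>j<?k. 0 \<le> w' j" using w0 sig by (simp add: w'_def)
    have "(\<Sum>i<?k. w' i) = (\<Sum>i<?k. w (\<sigma> i)) + (\<Sum>i<?k. if i = ?k - 1 then 1 else 0)"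
      by (simp add: w'_def sum.distrib)
    also have "\<dots> \<le> (\<Sum>i<?k. w i) + 1"
    proof -
      have "(\<Sum>i<?k. w (\<sigma> i)) = (\<Sum>i<?k. w i)" by (rule sum_perm[OF p, symmetric])
      moreover have "(\<Sum>i<?k. if i = ?k - 1 then 1 else (0::real)) \<le> 1" by simp
      ultimately show ?thesis by linarith
    qed
    finally have sw: "(\<Sum>i<?k. w' i) \<le> (\<Sum>i<?k. w i) + 1" .
    have "fec ?C ?B \<le> (\<Sum>i<length ?C. w' i)"
    proof (rule fec_le)
      show "\<forall>j<length ?C. 0 \<le> w' j" using w'0 by simp
      show "\<forall>y\<in>?B. 1 \<le> (\<Sum>j\<in>{j. j < length ?C \<and> y \<in> schema (?C ! j) \<inter> ?B}. w' j)"
      proof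
        fix y assume y: "y \<in> ?B"
        show "1 \<le> (\<Sum>j\<in>{j. j < length ?C \<and> y \<in> schema (?C ! j) \<inter> ?B}. w' j)"
        proof (cases "y \<in> Inl ` B")
          case True
          then obtain x where x: "y = Inl x" "x \<in> B" by auto
          have "1 \<le> (\<Sum>j\<in>{j. j < length Q \<and> x \<in> schema (Q ! j) \<inter> B}. w j)" using w1 x by simp
          also have "\<dots> = (\<Sum>j<?k. if x \<in> schema (Q ! j) \<inter> B then w j else 0)"
            by (rule sum_filter_if)
          also have "\<dots> = (\<Sum>i<?k. if x \<in> schema (Q ! \<sigma> i) \<inter> B then w (\<sigma> i) else 0)"
            by (rule sum_perm[OF p])
          also have "\<dots> \<le> (\<Sum>i<?k. if y \<in> schema (?C ! i) \<inter> ?B then w' i else 0)"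
          proof (rule sum_mono)
            fix i assume i: "i \<in> {..<?k}"
            show "(if x \<in> schema (Q ! \<sigma> i) \<inter> B then w (\<sigma> i) else 0)
                  \<le> (if y \<in> schema (?C ! i) \<inter> ?B then w' i else 0)"
              using i x w0 sig[of i] by (auto simp: comp_schema w'_def)
          qed
          also have "\<dots> = (\<Sum>j\<in>{j. j < length ?C \<and> y \<in> schema (?C ! j) \<inter> ?B}. w' j)"
            by (simp add: sum_filter_if)
          finally show ?thesis .
        next
          case False
          then obtain j where j: "y = Inr j" "1 \<le> j" "j \<le> ?k" using y by auto
          have mem: "?k - 1 \<in> {j. j < length ?C \<and> y \<in> schema (?C ! j) \<inter> ?B}"
            using j y by (auto simp: comp_schema)
          have "1 \<le> w' (?k - 1)" using w0 sig[of "?k - 1"] j by (simp add: w'_def)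
          also have "\<dots> \<le> (\<Sum>j\<in>{j. j < length ?C \<and> y \<in> schema (?C ! j) \<inter> ?B}. w' j)"
            by (rule member_le_sum[OF mem]) (use w'0 in auto)
          finally show ?thesis .
        qed
      qed
    qed
    then show "fec ?C ?B - 1 \<le> (\<Sum>j<length Q. w j)" using sw by simp
  qed
  then show ?thesis by simp
qed

lemma ext_eq: "mv_extension Q = mv_component Q ` {\<sigma>. \<sigma> permutes {..<length Q}}"
  by (auto simp: mv_extension_def)

theorem mainTheorem10:
  fixes Q :: "('r, 'v) query"
  shows "fhw Q \<le> fhw_union (mv_extension Q) \<and> fhw_union (mv_extension Q) \<le> fhw Q + 1"
proof -
  have fin: "finite (fhw ` mv_extension Q)"
    unfolding ext_eq by (intro finite_imageI finite_permutations) simp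
  have ne: "mv_component Q id \<in> mv_extension Q"
    unfolding ext_eq by (auto intro: permutes_id)
  have part1: "fhw Q \<le> fhw (mv_component Q \<sigma>)" if p: "\<sigma> permutes {..<length Q}" for \<sigma>
  proof (rule fhw_ge)
    fix N E bag assume td: "tree_decomp (mv_component Q \<sigma>) N E bag"
    have N: "finite N" "N \<noteq> {}" using td by (auto simp: tree_decomp_def is_tree_def)
    have "fhw Q \<le> Max ((\<lambda>n. fec Q {x. Inl x \<in> bag n}) ` N)"
      using fhw_le[OF td_restrict[OF p td]] by simp
    also have "\<dots> \<le> Max ((\<lambda>n. fec (mv_component Q \<sigma>) (bag n)) ` N) + 0"
    proof (rule Max_mono_fun[OF N])
      fix n assume "n \<in> N"
      then show "fec Q {x. Inl x \<in> bag n} \<le> fec (mv_component Q \<sigma>) (bag n) + 0"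
        using fec_restrict[OF p, of "bag n"] td by (simp add: tree_decomp_def)
    qed
    finally show "fhw Q \<le> Max ((\<lambda>n. fec (mv_component Q \<sigma>) (bag n)) ` N)" by simp
  qed
  have part2: "fhw (mv_component Q \<sigma>) \<le> fhw Q + 1" if p: "\<sigma> permutes {..<length Q}" for \<sigma>
  proof -
    have "fhw (mv_component Q \<sigma>) - 1 \<le> fhw Q"
    proof (rule fhw_ge)
      fix N E bag assume td: "tree_decomp Q N E bag"
      have N: "finite N" "N \<noteq> {}" using td by (auto simp: tree_decomp_def is_tree_def)
      have "fhw (mv_component Q \<sigma>) \<le>
          Max ((\<lambda>n. fec (mv_component Q \<sigma>) (Inl ` bag n \<union> Inr ` {1..length Q})) ` N)"
        using fhw_le[OF td_extend[OF p td]] by simp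
      also have "\<dots> \<le> Max ((\<lambda>n. fec Q (bag n)) ` N) + 1"
      proof (rule Max_mono_fun[OF N])
        fix n assume "n \<in> N"
        then show "fec (mv_component Q \<sigma>) (Inl ` bag n \<union> Inr ` {1..length Q}) \<le> fec Q (bag n) + 1"
          using fec_extend[OF p, of "bag n"] td by (simp add: tree_decomp_def)
      qed
      finally show "fhw (mv_component Q \<sigma>) - 1 \<le> Max ((\<lambda>n. fec Q (bag n)) ` N)" by simp
    qed
    then show ?thesis by simp
  qed
  have "fhw Q \<le> fhw (mv_component Q id)" by (rule part1) (rule permutes_id)
  also have "\<dots> \<le> fhw_union (mv_extension Q)"
    unfolding fhw_union_def using fin ne by (intro Max_ge) auto
  finally have A: "fhw Q \<le> fhw_union (mv_extension Q)" .
  have B: "fhw_union (mv_extension Q) \<le> fhw Q + 1"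
    unfolding fhw_union_def
  proof (rule Max.boundedI)
    show "finite (fhw ` mv_extension Q)" by (rule fin)
    show "fhw ` mv_extension Q \<noteq> {}" using ne by auto
    fix a assume "a \<in> fhw ` mv_extension Q"
    then obtain \<sigma> where "\<sigma> permutes {..<length Q}" "a = fhw (mv_component Q \<sigma>)"
      unfolding ext_eq by auto
    then show "a \<le> fhw Q + 1" using part2 by simp
  qed
  show ?thesis using A B by simp
qed

end
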